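(* Let $\rho_n=6-4\big(1+\frac1n\big)^{3/2}-4\big(1-\frac1n\big)^{3/2}+\big(1+\frac2n\big)^{3/2}+\big(1-\frac2n\big)^{3/2}$ for $n\ge2$. For every finitely supported complex sequence $\{A_n\}_{n\ge0}$ with $A_0=A_1=0$, not identically zero, and with the convention $A_{-1}=0$, $$\sum_{n=1}^\infty|A_n-2A_{n-1}+A_{n-2}|^2\ \ge\ \sum_{n=2}^\infty\rho_n|A_n|^2\ >\ \frac{9}{16}\sum_{n=2}^\infty\frac{|A_n|^2}{n^4}\ \ge\ \frac{9}{16}\sum_{n=1}^\infty\frac{|A_n|^2}{n^2(n+1)^2}.$$
   Context: $\rho_n=((-\Delta)^2 n^{3/2})/n^{3/2}$ is the improved Rellich weight of Gerhat–Krejčiřík–Štampach, where $(-\Delta)$ is the discrete Dirichlet Laplacian $((-\Delta)A)_n=2A_n-A_{n-1}-A_{n+1}$. The left side is $\sum_n|(\nabla^2A)_n|^2$ with $\nabla$ the backward difference; this is the inequality form used to relate the order-2 Knopp inequality to the Rellich inequality. *)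

theory Defs
  imports "HOL-Analysis.Analysis"
begin

definition rho :: "nat \<Rightarrow> real" where
  "rho n = 6 - 4 * (1 + 1 / real n) powr (3/2) - 4 * (1 - 1 / real n) powr (3/2)
             + (1 + 2 / real n) powr (3/2) + (1 - 2 / real n) powr (3/2)"

definition ext_seq :: "(nat \<Rightarrow> complex) \<Rightarrow> int \<Rightarrow> complex" where
  "ext_seq A k = (if k < 0 then 0 else A (nat k))"

definition second_diff :: "(nat \<Rightarrow> complex) \<Rightarrow> nat \<Rightarrow> complex" where
  "second_diff A n = ext_seq A (int n) - 2 * ext_seq A (int n - 1) + ext_seq A (int n - 2)"

end

theory Submission
  imports Defs
begin

definition pf :: "nat \<Rightarrow> real" where "pf m = (\<Prod>i<m. (3/2 - real i))"
definition q :: "real \<Rightarrow> nat \<Rightarrow> real \<Rightarrow> real" where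
  "q j m t = (1 + j*t) powr (3/2 - real m)"
definition dd :: "nat \<Rightarrow> real \<Rightarrow> real" where
 "dd m t = pf m * ((-2)^m * q (-2) m t - 4 * (-1)^m * q (-1) m t
     + 6 * 0^m - 4 * q 1 m t + 2^m * q 2 m t)"

lemma q_deriv:
  assumes "1 + j*t > 0"
  shows "DERIV (q j m) t :> (3/2 - real m) * j * q j (Suc m) t"
proof -
  have e: "3/2 - real (Suc m) = (3/2 - real m) - 1" by simp
  have "DERIV (\<lambda>t. (1 + j*t) powr (3/2 - real m)) t :> (3/2 - real m) * (1 + j*t) powr ((3/2 - real m) - 1) * j"
    using DERIV_powr[of "\<lambda>t. 1 + j*t" j t "\<lambda>_. 3/2 - real m" 0] assms
    by (auto intro!: derivative_eq_intros)
  then show ?thesis unfolding q_def[abs_def] e by (simp add: algebra_simps)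
qed

lemma dd_deriv:
  assumes "0 \<le> t" "t < 1/2"
  shows "DERIV (dd m) t :> dd (Suc m) t"
proof -
  have p: "1 + (-2)*t > 0" "1 + (-1)* t > 0" "1 + 1*t > 0" "1 + 2*t > 0" using assms by auto
  note d = q_deriv[OF p(1), of m] q_deriv[OF p(2), of m] q_deriv[OF p(3), of m] q_deriv[OF p(4), of m]
  have "DERIV (dd m) t :> pf m * ((-2)^m * ((3/2 - real m) * (-2) * q (-2) (Suc m) t)
      - 4 * (-1)^m * ((3/2 - real m) * (-1) * q (-1) (Suc m) t) + 0
      - 4 * ((3/2 - real m) * 1 * q 1 (Suc m) t) + 2^m * ((3/2 - real m) * 2 * q 2 (Suc m) t))"
    unfolding dd_def[abs_def]
    by (intro DERIV_cmult DERIV_add DERIV_diff DERIV_const d)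
  moreover have pS: "pf (Suc m) = pf m * (3/2 - real m)" by (simp add: pf_def)
  moreover have "pf m * ((-2)^m * ((3/2 - real m) * (-2) * q (-2) (Suc m) t)
      - 4 * (-1)^m * ((3/2 - real m) * (-1) * q (-1) (Suc m) t) + 0
      - 4 * ((3/2 - real m) * 1 * q 1 (Suc m) t) + 2^m * ((3/2 - real m) * 2 * q 2 (Suc m) t))
     = dd (Suc m) t" unfolding dd_def pS by (simp add: algebra_simps)
  ultimately show ?thesis by simp
qed

lemma dd0: "m < 4 \<Longrightarrow> dd m 0 = 0"
proof -
  assume "m < 4"
  then have "m = 0 \<or> m = 1 \<or> m = 2 \<or> m = 3" by auto
  then show ?thesis by (auto simp: dd_def q_def)
qed

lemma pf4: "pf 4 = 9/16"
  by (simp add: pf_def eval_nat_numeral lessThan_Suc)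

lemma phi_convex: "convex_on {0<..} (\<lambda>y::real. y powr (-5/2))"
proof (rule f''_ge0_imp_convex[where f' = "\<lambda>y. (-5/2) * y powr (-5/2 - 1)"
      and f'' = "\<lambda>y. (-5/2) * ((-5/2 - 1) * y powr (-5/2 - 1 - 1))"])
  show "convex {0::real<..}" by simp
  fix x :: real assume x: "x \<in> {0<..}"
  then show "DERIV (\<lambda>y::real. y powr (-5/2)) x :> (-5/2) * x powr (-5/2 - 1)"
    using has_real_derivative_powr[of x "-5/2"] by simp
  show "DERIV (\<lambda>y. (-5/2) * y powr (-5/2 - 1)) x :> (-5/2) * ((-5/2 - 1) * x powr (-5/2 - 1 - 1))"
    using x DERIV_cmult[OF has_real_derivative_powr[of x "-5/2 - 1"], of "-5/2"] by simp
  show "0 \<le> (-5/2) * ((-5/2 - 1) * x powr (-5/2 - 1 - 1))"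
    by simp
qed

lemma phi_mid:
  fixes a b :: real
  assumes "0 < a" "0 < b"
  shows "((a+b)/2) powr (-5/2) \<le> (a powr (-5/2) + b powr (-5/2)) / 2"
proof -
  have "((1 - 1/2) *\<^sub>R a + (1/2) *\<^sub>R b) powr (-5/2) \<le> (1 - 1/2) * a powr (-5/2) + (1/2) * b powr (-5/2)"
    using convex_onD[OF phi_convex, of "1/2" a b] assms by simp
  then show ?thesis by (simp add: field_simps)
qed

lemma q4_ineq:
  assumes "0 < t" "t < 1/2"
  shows "dd 4 t > 27/2"
proof -
  define P where "P = (\<lambda>y::real. y powr (-5/2))"
  have q4: "q j 4 t = P (1 + j*t)" for j unfolding q_def P_def by (simp add: eval_nat_numeral)
  have a1: "P (1 + t) \<le> (1 + P (1 + 2*t)) / 2"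
    using phi_mid[of 1 "1 + 2*t"] assms unfolding P_def by (simp add: add_divide_distrib)
  have a2: "P (1 - t) \<le> (1 + P (1 - 2*t)) / 2"
    using phi_mid[of 1 "1 - 2*t"] assms unfolding P_def by (simp add: diff_divide_distrib add_divide_distrib)
  have pos1: "P (1 + 2*t) > 0" "P (1 - 2*t) > 0" unfolding P_def using assms by auto
  have "P (1 + 2*t) * P (1 - 2*t) = (1 - 4*t^2) powr (-5/2)"
    unfolding P_def using assms by (simp add: powr_mult[symmetric] algebra_simps power2_eq_square)
  also have "\<dots> > 1 powr (-5/2)"
  proof (intro powr_less_mono2_neg)
    have "t * t < (1/2) * (1/2)" using assms by (intro mult_strict_mono) auto
    then show "0 < 1 - 4*t^2" by (simp add: power2_eq_square)
  qed (use assms in \<open>auto simp: power2_eq_square\<close>)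
  finally have prod: "P (1 + 2*t) * P (1 - 2*t) > 1" by simp
  have "(P (1 + 2*t) + P (1 - 2*t))^2 \<ge> 4 * (P (1 + 2*t) * P (1 - 2*t))"
    using sum_squares_ge_zero[of "P (1 + 2*t) - P (1 - 2*t)" 0]
    by (simp add: power2_eq_square algebra_simps)
  with prod have sq: "(P (1 + 2*t) + P (1 - 2*t))^2 > 2^2" by simp
  have S2: "P (1 + 2*t) + P (1 - 2*t) > 2"
    using power_less_imp_less_base[OF sq] pos1 by simp
  have "dd 4 t = 9/16 * (16 * P (1 - 2*t) - 4 * P (1 - t) - 4 * P (1 + t) + 16 * P (1 + 2*t))"
    unfolding dd_def pf4 q4 by (simp add: eval_nat_numeral)
  then show ?thesis using a1 a2 S2 by simp
qed

lemma rho_dd: "rho n = dd 0 (1 / real n)"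
  unfolding rho_def dd_def q_def pf_def by (simp add: algebra_simps)

lemma rho_bound_ge3:
  assumes "n \<ge> 3"
  shows "rho n > 9/16 / real n ^ 4"
proof -
  define x where "x = 1 / real n"
  have x0: "0 < x" and x1: "x < 1/2" using assms unfolding x_def by (auto simp: field_simps)
  have "\<exists>t. 0 < t \<and> t < x \<and> dd 0 x = (\<Sum>m<4. (dd m 0 / fact m) * x ^ m) + (dd 4 t / fact 4) * x ^ 4"
    by (rule Maclaurin[OF x0, of 4 dd "dd 0"]) (use x1 in \<open>auto intro: dd_deriv\<close>)
  then obtain t where t: "0 < t" "t < x" and e: "dd 0 x = (\<Sum>m<4. (dd m 0 / fact m) * x ^ m) + (dd 4 t / fact 4) * x ^ 4"
    by blast
  have "(\<Sum>m<4. (dd m 0 / fact m) * x ^ m) = 0" by (simp add: dd0)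
  with e have e2: "dd 0 x = dd 4 t / 24 * x ^ 4" by (simp add: fact_numeral)
  have "dd 4 t > 27/2" using q4_ineq t x1 by auto
  then have "dd 4 t / 24 * x^4 > 27/2 / 24 * x^4" using x0 by (intro mult_strict_right_mono) auto
  moreover have "9/16 / real n ^ 4 = 27/2/24 * x^4" unfolding x_def by (simp add: power_one_over)
  ultimately show ?thesis using e2 rho_dd[of n] x_def by simp
qed

lemma pow32: "0 \<le> y \<Longrightarrow> (y::real) powr (3/2) = y * sqrt y"
proof -
  assume y: "0 \<le> y"
  show ?thesis
  proof (cases "y = 0")
    case False
    have "y powr (3/2) = y powr (1 + 1/2)" by simp
    also have "\<dots> = y powr 1 * y powr (1/2)" by (rule powr_add)
    finally show ?thesis using y False by (simp add: powr_half_sqrt)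
  qed simp
qed

lemma rho2: "rho 2 > 9/16 / real 2 ^ 4"
proof -
  have "rho 2 = 6 - 4 * (3/2) powr (3/2) - 4 * (1/2) powr (3/2) + 2 powr (3/2)"
    unfolding rho_def by simp
  also have "\<dots> = 6 - 6 * sqrt (3/2) - 2 * sqrt (1/2) + 2 * sqrt 2"
    by (simp add: pow32)
  also have "sqrt (1/2) = sqrt 2 / 2"
    by (metis real_div_sqrt real_sqrt_divide real_sqrt_one zero_le_numeral times_divide_eq_left mult_1 divide_divide_eq_right)
  finally have r: "rho 2 = 6 - 6 * sqrt (3/2) + sqrt 2" by simp
  have a: "sqrt (3/2) < 1.2248" by (rule real_less_lsqrt) (auto simp: power2_eq_square)
  have b: "1.414 < sqrt 2" by (rule real_less_rsqrt) (auto simp: power2_eq_square)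
  show ?thesis using r a b by simp
qed

lemma rho_bound: "n \<ge> 2 \<Longrightarrow> rho n > 9/16 / real n ^ 4"
  using rho2 rho_bound_ge3 by (cases "n = 2") auto

lemma gs_point:
  fixes a b c h h' :: real
  assumes "h > 0" "h' > 0" "c \<ge> 0"
  shows "c*(a-b)^2 \<ge> c*(1 - h'/h)*a^2 + c*(1 - h/h')*b^2"
proof -
  have eq: "c*(a-b)^2 = c*(h*h')*(a/h - b/h')^2 + (c*(1 - h'/h)*a^2 + c*(1 - h/h')*b^2)"
    using assms by (simp add: field_simps power2_eq_square)
  have "c*(h*h')*(a/h - b/h')^2 \<ge> 0" using assms by simp
  then show ?thesis using eq by linarith
qed

lemma gs_point0:
  fixes a c h h' :: real
  assumes "h > 0" "h' \<ge> 0" "c \<ge> 0"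
  shows "c*(a-0)^2 \<ge> c*(1 - h'/h)*a^2"
proof -
  have "c*(1 - h'/h)*a^2 = c*a^2 - c*(h'/h)*a^2" by (simp add: algebra_simps)
  moreover have "c*(h'/h)*a^2 \<ge> 0" using assms by simp
  ultimately show ?thesis by simp
qed

lemma shift_sum:
  fixes F :: "nat \<Rightarrow> real"
  shows "(\<Sum>k=1..M. F (k-1)) + F M = F 0 + (\<Sum>k=1..M. F k)"
  by (induction M) auto

lemma hardy_gs:
  fixes v c h :: "nat \<Rightarrow> real"
  assumes v0: "v 0 = 0" and hpos: "\<forall>k\<ge>1. h k > 0" and h0: "h 0 \<ge> 0"
    and cpos: "\<forall>k\<ge>1. c k \<ge> 0" and vM: "\<forall>k\<ge>M. v k = 0"
  shows "(\<Sum>k=1..M. c k * (v k - v (k-1))^2)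
     \<ge> (\<Sum>k=1..M. (c k * (1 - h (k-1)/h k) + c (Suc k) * (1 - h (Suc k)/h k)) * (v k)^2)"
proof -
  define F where "F j = c (Suc j) * (1 - h (Suc j)/h j) * (v j)^2" for j
  have pt: "c k * (v k - v (k-1))^2 \<ge> c k * (1 - h (k-1)/h k) * (v k)^2 + F (k-1)"
    if k: "k \<in> {1..M}" for k
  proof (cases "k = 1")
    case True
    then show ?thesis using gs_point0[of "h 1" "h 0" "c 1" "v 1"] hpos h0 cpos v0
      by (simp add: F_def)
  next
    case False
    then have k2: "k - 1 \<ge> 1" "Suc (k-1) = k" using k by auto
    show ?thesis using gs_point[of "h k" "h (k-1)" "c k" "v k" "v (k-1)"] hpos cpos k k2
      unfolding F_def by (simp add: k2)
  qed
  have "(\<Sum>k=1..M. (c k * (1 - h (k-1)/h k) + c (Suc k) * (1 - h (Suc k)/h k)) * (v k)^2)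
     = (\<Sum>k=1..M. c k * (1 - h (k-1)/h k) * (v k)^2) + (\<Sum>k=1..M. F k)"
    unfolding sum.distrib[symmetric] F_def by (rule sum.cong) (auto simp: algebra_simps)
  also have "(\<Sum>k=1..M. F k) = (\<Sum>k=1..M. F (k-1))"
    using shift_sum[of F M] vM v0 by (simp add: F_def)
  also have "(\<Sum>k=1..M. c k * (1 - h (k-1)/h k) * (v k)^2) + (\<Sum>k=1..M. F (k-1))
      = (\<Sum>k=1..M. c k * (1 - h (k-1)/h k) * (v k)^2 + F (k-1))"
    by (rule sum.distrib[symmetric])
  also have "\<dots> \<le> (\<Sum>k=1..M. c k * (v k - v (k-1))^2)"
    by (rule sum_mono) (use pt in auto)
  finally show ?thesis .
qed

lemma dshift: "y > 1 \<Longrightarrow> DERIV (\<lambda>y::real. (y - 1) powr r) y :> r * (y - 1) powr (r - 1)"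
  using DERIV_fun_powr[of "\<lambda>y. y - 1" 1 y r] by (auto intro!: derivative_eq_intros)

lemma dplain: "y > 0 \<Longrightarrow> DERIV (\<lambda>y::real. y powr r) y :> r * y powr (r - 1)"
  using has_real_derivative_powr by blast

lemma psi_convex: "convex_on {3/2<..} (\<lambda>y::real. -(y powr (3/2) - (y - 1) powr (3/2)))"
proof (rule f''_ge0_imp_convex[where f' = "\<lambda>y. -((3/2) * y powr (3/2 - 1) - (3/2) * (y - 1) powr (3/2 - 1))"
      and f'' = "\<lambda>y. -((3/2) * ((3/2 - 1) * y powr (3/2 - 1 - 1)) - (3/2) * ((3/2 - 1) * (y - 1) powr (3/2 - 1 - 1)))"])
  show "convex {3/2::real<..}" by simp
  fix x :: real assume x: "x \<in> {3/2<..}"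
  then have x0: "x > 0" "x > 1" by auto
  show "DERIV (\<lambda>y::real. -(y powr (3/2) - (y - 1) powr (3/2))) x :> -((3/2) * x powr (3/2 - 1) - (3/2) * (x - 1) powr (3/2 - 1))"
    by (intro DERIV_minus DERIV_diff dplain dshift x0)
  show "DERIV (\<lambda>y. -((3/2) * y powr (3/2 - 1) - (3/2) * (y - 1) powr (3/2 - 1))) x :>
     -((3/2) * ((3/2 - 1) * x powr (3/2 - 1 - 1)) - (3/2) * ((3/2 - 1) * (x - 1) powr (3/2 - 1 - 1)))"
    by (intro DERIV_minus DERIV_diff DERIV_cmult dplain dshift x0)
  have "x powr (-1/2) \<le> (x - 1) powr (-1/2)"
    using x0 powr_less_mono2_neg[of "-1/2" "x - 1" x] by auto
  then show "0 \<le> -((3/2) * ((3/2 - 1) * x powr (3/2 - 1 - 1)) - (3/2) * ((3/2 - 1) * (x - 1) powr (3/2 - 1 - 1)))"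
    by simp
qed

definition g :: "nat \<Rightarrow> real" where "g k = real k powr (3/2)"

lemma concave_step:
  assumes "k \<ge> 2"
  shows "g (k-1) - g (k-2) + (g (Suc k) - g k) \<le> 2 * (g k - g (k-1))"
proof (cases "k = 2")
  case True
  have s2: "g 2 = 2 * sqrt 2" "g 3 = 3 * sqrt 3" "g 1 = 1" "g 0 = 0"
    unfolding g_def by (simp_all add: pow32)
  have "(1 + sqrt 3)^2 \<le> (2 * sqrt 2)^2"
    by (simp add: power2_eq_square algebra_simps real_sqrt_le_iff)
      (smt (verit) real_sqrt_le_iff real_sqrt_four real_sqrt_pow2 power2_eq_square)
  then have "1 + sqrt 3 \<le> 2 * sqrt 2" by (rule power2_le_imp_le) simp
  then show ?thesis using True s2 by (simp add: eval_nat_numeral)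
next
  case False
  then have k3: "k \<ge> 3" using assms by simp
  define x where "x = real k"
  define psi where "psi = (\<lambda>y::real. -(y powr (3/2) - (y - 1) powr (3/2)))"
  have "psi ((1 - 1/2) *\<^sub>R (x - 1) + (1/2) *\<^sub>R (x + 1)) \<le> (1 - 1/2) * psi (x - 1) + (1/2) * psi (x + 1)"
    using convex_onD[OF psi_convex[folded psi_def], of "1/2" "x - 1" "x + 1"] k3 unfolding x_def by auto
  then have "psi x \<le> (psi (x - 1) + psi (x + 1)) / 2" by (simp add: field_simps)
  moreover have "g k = x powr (3/2)" "g (k-1) = (x - 1) powr (3/2)" "g (k-2) = (x - 1 - 1) powr (3/2)"
      "g (Suc k) = (x + 1) powr (3/2)"
    unfolding g_def x_def using k3 by (auto simp: of_nat_diff add.commute)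
  ultimately show ?thesis unfolding psi_def by (simp add: field_simps)
qed

lemma frac3: "(d::real) \<noteq> 0 \<Longrightarrow> 2 - x/d - y/d = (2*d - x - y)/d"
  by (simp add: field_simps)

lemma frac_mul: "(d::real) \<noteq> 0 \<Longrightarrow> (X/d)*(d/a) = X/a"
  by (simp add: field_simps)
lemma frac_mul2: "(d::real) \<noteq> 0 \<Longrightarrow> (X/d)*(-d/a) = -X/a"
  by (simp add: field_simps)

lemma alg5:
  fixes a0 a1 a2 a3 a4 :: real
  assumes "a2 > 0" "a2 - a1 > 0" "a3 - a2 > 0"
  shows "(2 - (a1-a0)/(a2-a1) - (a3-a2)/(a2-a1))*(1 - a1/a2)
       + (2 - (a2-a1)/(a3-a2) - (a4-a3)/(a3-a2))*(1 - a3/a2)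
       = 6 - 4*(a3/a2) - 4*(a1/a2) + a4/a2 + a0/a2"
proof -
  have n1: "a2 - a1 \<noteq> 0" "a3 - a2 \<noteq> 0" "a2 \<noteq> 0" using assms by auto
  have h1: "(2 - (a1-a0)/(a2-a1) - (a3-a2)/(a2-a1))*(1 - a1/a2) = (2*(a2-a1) - (a1-a0) - (a3-a2))/a2"
  proof -
    have "(2 - (a1-a0)/(a2-a1) - (a3-a2)/(a2-a1)) = (2*(a2-a1) - (a1-a0) - (a3-a2))/(a2-a1)"
      by (rule frac3) (use n1 in simp)
    moreover have "(1 - a1/a2) = (a2-a1)/a2" using n1 by (simp add: field_simps)
    ultimately show ?thesis using frac_mul[OF n1(1)] by simp
  qed
  have h2: "(2 - (a2-a1)/(a3-a2) - (a4-a3)/(a3-a2))*(1 - a3/a2) = -(2*(a3-a2) - (a2-a1) - (a4-a3))/a2"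
  proof -
    have "(2 - (a2-a1)/(a3-a2) - (a4-a3)/(a3-a2)) = (2*(a3-a2) - (a2-a1) - (a4-a3))/(a3-a2)"
      by (rule frac3) (use n1 in simp)
    moreover have "(1 - a3/a2) = -(a3-a2)/a2" using n1 by (simp add: field_simps)
    ultimately show ?thesis using frac_mul2[OF n1(2)] by (simp only:)
  qed
  have "6 - 4*(a3/a2) - 4*(a1/a2) + a4/a2 + a0/a2 = (6*a2 - 4*a3 - 4*a1 + a4 + a0)/a2"
    using n1 by (simp add: field_simps)
  moreover have "(2*(a2-a1) - (a1-a0) - (a3-a2))/a2 + -(2*(a3-a2) - (a2-a1) - (a4-a3))/a2
     = (6*a2 - 4*a3 - 4*a1 + a4 + a0)/a2"
    by (simp add: add_divide_distrib[symmetric] algebra_simps)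
  ultimately show ?thesis using h1 h2 by simp
qed

lemma g_pos: "k \<ge> 1 \<Longrightarrow> g k > 0" unfolding g_def by simp
lemma g_0: "g 0 = 0" unfolding g_def by simp
lemma g_mono: "k \<ge> 1 \<Longrightarrow> g k - g (k-1) > 0"
  unfolding g_def using powr_less_mono2[of "3/2" "real (k-1)" "real k"] by (auto simp: of_nat_diff)

lemma rho_g:
  assumes "k \<ge> 2"
  shows "rho k = 6 - 4*(g (Suc k)/g k) - 4*(g (k-1)/g k) + g (k+2)/g k + g (k-2)/g k"
proof -
  have kp: "real k > 0" using assms by simp
  have b: "1 + 1/real k = real (Suc k)/real k" "1 - 1/real k = real (k-1)/real k"
      "1 + 2/real k = real (k+2)/real k" "1 - 2/real k = real (k-2)/real k"
    using kp assms by (auto simp: field_simps of_nat_diff)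
  show ?thesis unfolding rho_def b g_def by (simp add: powr_divide)
qed

lemma rellich_real:
  fixes u :: "nat \<Rightarrow> real"
  assumes u0: "u 0 = 0" and u1: "u 1 = 0" and uN: "\<forall>k\<ge>N. u k = 0"
  shows "(\<Sum>k=2..Suc N. (u k - 2 * u (k-1) + u (k-2))^2) \<ge> (\<Sum>k=2..Suc N. rho k * (u k)^2)"
proof -
  define M where "M = Suc N"
  define G where "G k = (if k = 0 then 0 else g k - g (k-1))" for k
  define v where "v k = (if k = 0 then 0 else u k - u (k-1))" for k
  define w where "w k = 1 * (1 - G (k-1)/G k) + 1 * (1 - G (Suc k)/G k)" for k
  define c where "c k = (if k \<le> 1 then 0 else w k)" for k
  have Gpos: "\<forall>k\<ge>1. G k > 0" using g_mono unfolding G_def by auto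
  have vM: "\<forall>k\<ge>M. v k = 0" using uN unfolding v_def M_def by auto
  have step1: "(\<Sum>k=1..M. (\<lambda>_. 1::real) k * (v k - v (k-1))^2)
     \<ge> (\<Sum>k=1..M. ((\<lambda>_. 1::real) k * (1 - G (k-1)/G k) + (\<lambda>_. 1::real) (Suc k) * (1 - G (Suc k)/G k)) * (v k)^2)"
    by (rule hardy_gs) (use Gpos vM in \<open>auto simp: v_def G_def\<close>)
  have cpos: "\<forall>k\<ge>1. c k \<ge> 0"
  proof (intro allI impI)
    fix k :: nat assume "k \<ge> 1"
    show "c k \<ge> 0"
    proof (cases "k \<le> 1")
      case False
      then have k2: "k \<ge> 2" by simp
      have Gk: "G k > 0" using Gpos k2 by auto
      have kk: "k - 1 \<noteq> 0" "k - 1 - 1 = k - 2" "k \<noteq> 0" using k2 by auto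
      have e: "G (k-1) = g (k-1) - g (k-2)" "G (Suc k) = g (Suc k) - g k" "G k = g k - g (k-1)"
        unfolding G_def using kk by simp_all
      have "w k = 2 - G (k-1)/G k - G (Suc k)/G k" unfolding w_def by simp
      also have "\<dots> = (2 * G k - G (k-1) - G (Suc k)) / G k" using Gk by (intro frac3) simp
      finally have wk: "w k = (2 * G k - G (k-1) - G (Suc k)) / G k" .
      have "2 * G k - G (k-1) - G (Suc k) \<ge> 0" using concave_step[OF k2] unfolding e by simp
      then have "w k \<ge> 0" unfolding wk using Gk by simp
      then show ?thesis unfolding c_def using False by simp
    qed (simp add: c_def)
  qed
  have step2: "(\<Sum>k=1..M. c k * (u k - u (k-1))^2)
     \<ge> (\<Sum>k=1..M. (c k * (1 - g (k-1)/g k) + c (Suc k) * (1 - g (Suc k)/g k)) * (u k)^2)"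
    by (rule hardy_gs) (use u0 cpos uN g_pos in \<open>auto simp: g_0 M_def\<close>)
  have mid: "(\<Sum>k=1..M. ((\<lambda>_. 1::real) k * (1 - G (k-1)/G k) + (\<lambda>_. 1::real) (Suc k) * (1 - G (Suc k)/G k)) * (v k)^2)
      = (\<Sum>k=1..M. c k * (u k - u (k-1))^2)"
  proof (rule sum.cong)
    fix k assume k: "k \<in> {1..M}"
    show "((\<lambda>_. 1::real) k * (1 - G (k-1)/G k) + (\<lambda>_. 1::real) (Suc k) * (1 - G (Suc k)/G k)) * (v k)^2
       = c k * (u k - u (k-1))^2"
      using k u0 u1 unfolding c_def w_def v_def by (cases "k = 1") auto
  qed simp
  have lhs: "(\<Sum>k=1..M. (\<lambda>_. 1::real) k * (v k - v (k-1))^2) = (\<Sum>k=2..M. (u k - 2 * u (k-1) + u (k-2))^2)"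
  proof -
    have "(\<Sum>k=1..M. (\<lambda>_. 1::real) k * (v k - v (k-1))^2) = (\<lambda>_. 1::real) 1 * (v 1 - v (1-1))^2 + (\<Sum>k=Suc 1..M. (\<lambda>_. 1::real) k * (v k - v (k-1))^2)"
      by (rule sum.atLeast_Suc_atMost) (simp add: M_def)
    also have "(\<Sum>k=Suc 1..M. (\<lambda>_. 1::real) k * (v k - v (k-1))^2) = (\<Sum>k=2..M. (u k - 2 * u (k-1) + u (k-2))^2)"
    proof (rule sum.cong)
      fix k assume "k \<in> {2..M}"
      then have "k \<ge> 2" by simp
      then have kk: "k - 1 \<noteq> 0" "k - 1 - 1 = k - 2" "k \<noteq> 0" by auto
      then have vv: "v k = u k - u (k-1)" "v (k-1) = u (k-1) - u (k-2)" unfolding v_def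
        by simp_all
      show "(\<lambda>_. 1::real) k * (v k - v (k-1))^2 = (u k - 2 * u (k-1) + u (k-2))^2"
        unfolding vv by (simp add: algebra_simps)
    qed simp
    finally show ?thesis using u0 u1 by (simp add: v_def)
  qed
  have rhs: "(\<Sum>k=1..M. (c k * (1 - g (k-1)/g k) + c (Suc k) * (1 - g (Suc k)/g k)) * (u k)^2)
      = (\<Sum>k=2..M. rho k * (u k)^2)"
  proof -
    have "(\<Sum>k=1..M. (c k * (1 - g (k-1)/g k) + c (Suc k) * (1 - g (Suc k)/g k)) * (u k)^2)
        = (c 1 * (1 - g (1-1)/g 1) + c (Suc 1) * (1 - g (Suc 1)/g 1)) * (u 1)^2 + (\<Sum>k=Suc 1..M. (c k * (1 - g (k-1)/g k) + c (Suc k) * (1 - g (Suc k)/g k)) * (u k)^2)"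
      by (rule sum.atLeast_Suc_atMost) (simp add: M_def)
    also have "(\<Sum>k=Suc 1..M. (c k * (1 - g (k-1)/g k) + c (Suc k) * (1 - g (Suc k)/g k)) * (u k)^2) = (\<Sum>k=2..M. rho k * (u k)^2)"
    proof (rule sum.cong)
      fix k assume "k \<in> {2..M}"
      then have k2: "k \<ge> 2" by simp
      have kk: "k - 1 \<noteq> 0" "k - 1 - 1 = k - 2" "k \<noteq> 0" "Suc (Suc k) = k + 2" using k2 by auto
      have e: "G (k-1) = g (k-1) - g (k-2)" "G (Suc k) = g (Suc k) - g k" "G k = g k - g (k-1)"
          "G (Suc (Suc k)) = g (k+2) - g (Suc k)"
        unfolding G_def using kk by simp_all
      have ck0: "c k = 2 - G (k-1)/G k - G (Suc k)/G k" using k2 by (simp add: c_def w_def)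
      have ck: "c k = 2 - (g (k-1) - g (k-2))/(g k - g (k-1)) - (g (Suc k) - g k)/(g k - g (k-1))"
        using ck0 by (simp only: e)
      have cSk0: "c (Suc k) = 2 - G k/G (Suc k) - G (Suc (Suc k))/G (Suc k)" using k2 by (simp add: c_def w_def)
      have cSk: "c (Suc k) = 2 - (g k - g (k-1))/(g (Suc k) - g k) - (g (k+2) - g (Suc k))/(g (Suc k) - g k)"
        using cSk0 by (simp only: e)
      have p: "g k > 0" "g k - g (k-1) > 0" "g (Suc k) - g k > 0"
        using g_pos[of k] g_mono[of k] g_mono[of "Suc k"] k2 by auto
      show "(c k * (1 - g (k-1)/g k) + c (Suc k) * (1 - g (Suc k)/g k)) * (u k)^2 = rho k * (u k)^2"
        unfolding ck cSk alg5[OF p] rho_g[OF k2] by simp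
    qed simp
    finally show ?thesis using u1 by simp
  qed
  show ?thesis using step1 step2 mid lhs rhs unfolding M_def by linarith
qed

lemma sd_eq: "n \<ge> 2 \<Longrightarrow> second_diff A n = A n - 2 * A (n-1) + A (n-2)"
  unfolding second_diff_def ext_seq_def by (auto simp: nat_diff_distrib)

lemma sd_1: "A 0 = 0 \<Longrightarrow> A 1 = 0 \<Longrightarrow> second_diff A 1 = 0"
  unfolding second_diff_def ext_seq_def by simp

lemma infsum_red:
  fixes f :: "nat \<Rightarrow> real"
  assumes "T \<subseteq> S" "finite T" "\<And>x. x \<in> S - T \<Longrightarrow> f x = 0"
  shows "infsum f S = sum f T"
proof -
  have "infsum f S = infsum f T"
    by (rule infsum_cong_neutral) (use assms in auto)
  then show ?thesis using assms(2) by simp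
qed

theorem proposition5p1:
  fixes A :: "nat \<Rightarrow> complex"
  assumes "finite {n. A n \<noteq> 0}"
    and "A 0 = 0" and "A 1 = 0"
    and "\<exists>n. A n \<noteq> 0"
  shows "(\<Sum>\<^sub>\<infinity>n\<in>{1..}. (cmod (second_diff A n))\<^sup>2)
           \<ge> (\<Sum>\<^sub>\<infinity>n\<in>{2..}. rho n * (cmod (A n))\<^sup>2)
       \<and> (\<Sum>\<^sub>\<infinity>n\<in>{2..}. rho n * (cmod (A n))\<^sup>2)
           > 9/16 * (\<Sum>\<^sub>\<infinity>n\<in>{2..}. (cmod (A n))\<^sup>2 / real n ^ 4)
       \<and> 9/16 * (\<Sum>\<^sub>\<infinity>n\<in>{2..}. (cmod (A n))\<^sup>2 / real n ^ 4)
           \<ge> 9/16 * (\<Sum>\<^sub>\<infinity>n\<in>{1..}. (cmod (A n))\<^sup>2 / (real n ^ 2 * real (n + 1) ^ 2))"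
proof -
  obtain N where N: "{n. A n \<noteq> 0} \<subseteq> {..<N}" using finite_nat_bounded[OF assms(1)] by blast
  then have AN: "\<forall>k\<ge>N. A k = 0" by auto
  define M where "M = Suc N"
  have I1: "(\<Sum>\<^sub>\<infinity>n\<in>{1..}. (cmod (second_diff A n))\<^sup>2) = (\<Sum>n=2..M. (cmod (A n - 2 * A (n-1) + A (n-2)))\<^sup>2)"
  proof -
    have "(\<Sum>\<^sub>\<infinity>n\<in>{1..}. (cmod (second_diff A n))\<^sup>2) = (\<Sum>n=2..M. (cmod (second_diff A n))\<^sup>2)"
    proof (rule infsum_red)
      fix x assume x: "x \<in> {1..} - {2..M}"
      show "(cmod (second_diff A x))\<^sup>2 = 0"
      proof (cases "x = 1")
        case True then show ?thesis using sd_1[OF assms(2,3)] by simp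
      next
        case False
        then have "x \<ge> 2" "x > M" using x by auto
        then show ?thesis using sd_eq[of x A] AN unfolding M_def by auto
      qed
    qed auto
    also have "\<dots> = (\<Sum>n=2..M. (cmod (A n - 2 * A (n-1) + A (n-2)))\<^sup>2)"
      by (rule sum.cong) (auto simp: sd_eq)
    finally show ?thesis .
  qed
  have I2: "(\<Sum>\<^sub>\<infinity>n\<in>{2..}. rho n * (cmod (A n))\<^sup>2) = (\<Sum>n=2..M. rho n * (cmod (A n))\<^sup>2)"
    by (rule infsum_red) (use AN in \<open>auto simp: M_def\<close>)
  have I3: "(\<Sum>\<^sub>\<infinity>n\<in>{2..}. (cmod (A n))\<^sup>2 / real n ^ 4) = (\<Sum>n=2..M. (cmod (A n))\<^sup>2 / real n ^ 4)"
    by (rule infsum_red) (use AN in \<open>auto simp: M_def\<close>)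
  have I4: "(\<Sum>\<^sub>\<infinity>n\<in>{1..}. (cmod (A n))\<^sup>2 / (real n ^ 2 * real (n + 1) ^ 2))
      = (\<Sum>n=2..M. (cmod (A n))\<^sup>2 / (real n ^ 2 * real (n + 1) ^ 2))"
  proof (rule infsum_red)
    fix x assume x: "x \<in> {1..} - {2..M}"
    then have "x = 1 \<or> x \<ge> N" unfolding M_def by auto
    then show "(cmod (A x))\<^sup>2 / (real x ^ 2 * real (x + 1) ^ 2) = 0" using AN assms(3) by auto
  qed auto
  have R1: "(\<Sum>k=2..Suc N. ((\<lambda>k. Re (A k)) k - 2 * (\<lambda>k. Re (A k)) (k-1) + (\<lambda>k. Re (A k)) (k-2))^2)
      \<ge> (\<Sum>k=2..Suc N. rho k * ((\<lambda>k. Re (A k)) k)^2)"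
    by (rule rellich_real) (use assms AN in auto)
  have R2: "(\<Sum>k=2..Suc N. ((\<lambda>k. Im (A k)) k - 2 * (\<lambda>k. Im (A k)) (k-1) + (\<lambda>k. Im (A k)) (k-2))^2)
      \<ge> (\<Sum>k=2..Suc N. rho k * ((\<lambda>k. Im (A k)) k)^2)"
    by (rule rellich_real) (use assms AN in auto)
  have P1: "(\<Sum>n=2..M. (cmod (A n - 2 * A (n-1) + A (n-2)))\<^sup>2) \<ge> (\<Sum>n=2..M. rho n * (cmod (A n))\<^sup>2)"
  proof -
    have "(\<Sum>n=2..M. (cmod (A n - 2 * A (n-1) + A (n-2)))\<^sup>2)
       = (\<Sum>k=2..Suc N. (Re (A k) - 2 * Re (A (k-1)) + Re (A (k-2)))^2) + (\<Sum>k=2..Suc N. (Im (A k) - 2 * Im (A (k-1)) + Im (A (k-2)))^2)"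
      unfolding M_def sum.distrib[symmetric] by (rule sum.cong) (auto simp: cmod_power2)
    moreover have "(\<Sum>n=2..M. rho n * (cmod (A n))\<^sup>2) = (\<Sum>k=2..Suc N. rho k * (Re (A k))^2) + (\<Sum>k=2..Suc N. rho k * (Im (A k))^2)"
      unfolding M_def sum.distrib[symmetric] by (rule sum.cong) (auto simp: cmod_power2 algebra_simps)
    ultimately show ?thesis using R1 R2 by simp
  qed
  obtain n0 where n0: "A n0 \<noteq> 0" using assms(4) by blast
  then have n0r: "n0 \<in> {2..M}" using assms(2,3) N unfolding M_def
    by (cases "n0 = 0"; cases "n0 = 1") auto
  have P2: "(\<Sum>n=2..M. rho n * (cmod (A n))\<^sup>2) > 9/16 * (\<Sum>n=2..M. (cmod (A n))\<^sup>2 / real n ^ 4)"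
  proof -
    have "9/16 * (\<Sum>n=2..M. (cmod (A n))\<^sup>2 / real n ^ 4) = (\<Sum>n=2..M. 9/16 / real n ^ 4 * (cmod (A n))\<^sup>2)"
      unfolding sum_distrib_left by (rule sum.cong) auto
    also have "\<dots> < (\<Sum>n=2..M. rho n * (cmod (A n))\<^sup>2)"
    proof (rule sum_strict_mono_ex1)
      show "\<forall>x\<in>{2..M}. 9/16 / real x ^ 4 * (cmod (A x))\<^sup>2 \<le> rho x * (cmod (A x))\<^sup>2"
      proof
        fix x assume "x \<in> {2..M}"
        then have "9/16 / real x ^ 4 \<le> rho x" using rho_bound[of x] by simp
        then show "9/16 / real x ^ 4 * (cmod (A x))\<^sup>2 \<le> rho x * (cmod (A x))\<^sup>2"
          by (rule mult_right_mono) simp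
      qed
      show "\<exists>a\<in>{2..M}. 9/16 / real a ^ 4 * (cmod (A a))\<^sup>2 < rho a * (cmod (A a))\<^sup>2"
        using n0r n0 rho_bound[of n0] by (intro bexI[of _ n0] mult_strict_right_mono) auto
    qed simp
    finally show ?thesis .
  qed
  have P3: "(\<Sum>n=2..M. (cmod (A n))\<^sup>2 / real n ^ 4) \<ge> (\<Sum>n=2..M. (cmod (A n))\<^sup>2 / (real n ^ 2 * real (n + 1) ^ 2))"
  proof (rule sum_mono)
    fix n assume n: "n \<in> {2..M}"
    have "real n ^ 2 \<le> real (n + 1) ^ 2" by (intro power_mono) auto
    then have "real n ^ 2 * real n ^ 2 \<le> real n ^ 2 * real (n + 1) ^ 2" by (intro mult_left_mono) auto
    then have "real n ^ 4 \<le> real n ^ 2 * real (n + 1) ^ 2" by (simp add: power_add[symmetric])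
    then show "(cmod (A n))\<^sup>2 / (real n ^ 2 * real (n + 1) ^ 2) \<le> (cmod (A n))\<^sup>2 / real n ^ 4"
      using n by (intro divide_left_mono) auto
  qed
  show ?thesis unfolding I1 I2 I3 I4 using P1 P2 P3 by simp
qed

end
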